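(* For every integer $m\ge 0$, $$\int_0^{\pi/2}x^{2m}\ln(\sin x)\,dx=(2m)!\sum_{j=0}^m\frac{(-1)^{j-1}\,\eta(2j+1)}{2^{2j}(2m-2j+1)!}\left(\frac{\pi}{2}\right)^{2m-2j+1}.$$
   Context: $\eta$ denotes the Dirichlet eta function, $\eta(s)=\sum_{n=1}^\infty\frac{(-1)^{n-1}}{n^s}$; in particular $\eta(1)=\ln 2$. *)

theory Defs
  imports "HOL-Analysis.Analysis"
begin

text \<open>Dirichlet eta function for real arguments: eta s = sum over n >= 1 of (-1)^(n-1) / n^s.
  Indexed from n = 0 as (-1)^n / (n+1)^s.\<close>
definition dirichlet_eta :: "real \<Rightarrow> real" where
  "dirichlet_eta s = (\<Sum>n. (-1) ^ n / (real (Suc n)) powr s)"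

end

theory Submission
  imports Defs "HOL-Real_Asymp.Real_Asymp"
begin

fun jc :: "real \<Rightarrow> real \<Rightarrow> nat \<Rightarrow> real" and ks :: "real \<Rightarrow> real \<Rightarrow> nat \<Rightarrow> real" where
  "jc w b 0 = sin (w*b) / w"
| "ks w b 0 = (1 - cos (w*b)) / w"
| "jc w b (Suc n) = b^(Suc n) * sin (w*b) / w - real (Suc n) / w * ks w b n"
| "ks w b (Suc n) = real (Suc n) / w * jc w b n - b ^ Suc n * cos (w*b) / w"

lemma jc_ks_integral:
  fixes w b :: real
  assumes "w \<noteq> 0" "0 \<le> b"
  shows "((\<lambda>x. x^n * cos (w*x)) has_integral jc w b n) {0..b} \<and>
         ((\<lambda>x. x^n * sin (w*x)) has_integral ks w b n) {0..b}"
proof (induction n)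
  case 0
  have d1: "((\<lambda>x. sin (w*x) / w) has_vector_derivative cos (w*x)) (at x)" for x
    using assms(1) by (auto intro!: derivative_eq_intros simp: has_real_derivative_iff_has_vector_derivative[symmetric])
  have d2: "((\<lambda>x. - cos (w*x) / w) has_vector_derivative sin (w*x)) (at x)" for x
    using assms(1) by (auto intro!: derivative_eq_intros simp: has_real_derivative_iff_has_vector_derivative[symmetric])
  have "((\<lambda>x. cos (w*x)) has_integral (sin (w*b)/w - sin (w*0)/w)) {0..b}"
    by (rule fundamental_theorem_of_calculus[OF assms(2)]) (blast intro: has_vector_derivative_at_within d1)
  moreover have "((\<lambda>x. sin (w*x)) has_integral (- cos (w*b)/w - (- cos (w*0)/w))) {0..b}"
    by (rule fundamental_theorem_of_calculus[OF assms(2)]) (blast intro: has_vector_derivative_at_within d2)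
  ultimately show ?case by (simp add: diff_divide_distrib)
next
  case (Suc n)
  have dp: "((\<lambda>x. x^Suc n) has_vector_derivative (real (Suc n) * x^n)) (at x)" for x
    using DERIV_pow[of "Suc n" x] by (simp add: has_real_derivative_iff_has_vector_derivative)
  have d1: "((\<lambda>x. sin (w*x) / w) has_vector_derivative cos (w*x)) (at x)" for x
    using assms(1) by (auto intro!: derivative_eq_intros simp: has_real_derivative_iff_has_vector_derivative[symmetric])
  have d2: "((\<lambda>x. - cos (w*x) / w) has_vector_derivative sin (w*x)) (at x)" for x
    using assms(1) by (auto intro!: derivative_eq_intros simp: has_real_derivative_iff_has_vector_derivative[symmetric])
  have A: "((\<lambda>x. cos (w*x) * x^Suc n) has_integral jc w b (Suc n)) {0..b}"
  proof (rule integration_by_parts[OF bounded_bilinear_mult assms(2), of "\<lambda>x. sin (w*x) / w" "\<lambda>x. x^Suc n"])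
    show "continuous_on {0..b} (\<lambda>x. sin (w * x) / w)" using assms(1) by (intro continuous_intros) auto
    show "continuous_on {0..b} (\<lambda>x. x^Suc n)" by (intro continuous_intros)
    show "((\<lambda>x. sin (w * x) / w * (real (Suc n) * x ^ n)) has_integral
      sin (w * b) / w * b ^ Suc n - sin (w * 0) / w * 0 ^ Suc n - jc w b (Suc n)) {0..b}"
    proof -
      have *: "(\<lambda>x. sin (w * x) / w * (real (Suc n) * x ^ n)) = (\<lambda>x. real (Suc n) / w * (x ^ n * sin (w * x)))"
        by (simp add: fun_eq_iff)
      have **: "sin (w * b) / w * b ^ Suc n - sin (w * 0) / w * 0 ^ Suc n - jc w b (Suc n) = real (Suc n) / w * ks w b n"
        by simp
      show ?thesis unfolding * ** by (rule has_integral_mult_right[OF conjunct2[OF Suc.IH]])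
    qed
  qed (use d1 dp in blast)+
  have B: "((\<lambda>x. sin (w*x) * x^Suc n) has_integral ks w b (Suc n)) {0..b}"
  proof (rule integration_by_parts[OF bounded_bilinear_mult assms(2), of "\<lambda>x. - cos (w*x) / w" "\<lambda>x. x^Suc n"])
    show "continuous_on {0..b} (\<lambda>x. - cos (w * x) / w)" using assms(1) by (intro continuous_intros) auto
    show "continuous_on {0..b} (\<lambda>x. x^Suc n)" by (intro continuous_intros)
    show "((\<lambda>x. - cos (w * x) / w * (real (Suc n) * x ^ n)) has_integral
      - cos (w * b) / w * b ^ Suc n - - cos (w * 0) / w * 0 ^ Suc n - ks w b (Suc n)) {0..b}"
    proof -
      have *: "(\<lambda>x. - cos (w * x) / w * (real (Suc n) * x ^ n)) = (\<lambda>x. (- real (Suc n) / w) * (x ^ n * cos (w * x)))"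
        using assms(1) by (simp add: fun_eq_iff field_simps)
      have **: "- cos (w * b) / w * b ^ Suc n - - cos (w * 0) / w * 0 ^ Suc n - ks w b (Suc n) = (- real (Suc n) / w) * jc w b n"
        using assms(1) by (simp add: field_simps)
      show ?thesis unfolding * ** by (rule has_integral_mult_right[OF conjunct1[OF Suc.IH]])
    qed
  qed (use d2 dp in blast)+
  show ?case using A B by (simp add: mult.commute)
qed

lemma log_series_cos:
  fixes r x :: real
  assumes "0 \<le> r" "r < 1"
  shows "(\<lambda>n. r^n * cos (real n * (2*x)) / real n) sums (- ln (1 - 2*r*cos (2*x) + r^2) / 2)"
proof -
  define z where "z = - rcis r (2*x)"
  have nz: "cmod z < 1" using assms by (simp add: z_def)
  from Ln_series'[OF nz] have "(\<lambda>n. Re (- ((-z)^n) / of_nat n)) sums Re (ln (1 + z))"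
    by (rule sums_Re)
  moreover have "(\<lambda>n. Re (- ((-z)^n) / of_nat n)) = (\<lambda>n. - (r^n * cos (real n * (2*x)) / real n))"
    by (rule ext) (simp add: z_def DeMoivre2 Re_divide_of_nat)
  moreover have "1 + z \<noteq> 0"
    using nz by (metis add.inverse_unique norm_minus_cancel norm_one order_less_irrefl)
  moreover have "(cmod (1 + z))^2 = 1 - 2*r*cos (2*x) + r^2"
  proof -
    have "(cmod (1 + z))^2 = (Re (1+z))^2 + (Im (1+z))^2" by (rule cmod_power2)
    also have "\<dots> = (1 - r * cos (2*x))^2 + (r * sin (2*x))^2" by (simp add: z_def rcis_def)
    also have "\<dots> = 1 - 2*r*cos (2*x) + r^2 * ((sin (2*x))^2 + (cos (2*x))^2)"
      by algebra
    finally show ?thesis by simp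
  qed
  ultimately have "(\<lambda>n. - (r^n * cos (real n * (2*x)) / real n)) sums ln (cmod (1 + z))"
    by (simp only:) simp
  moreover have "ln (cmod (1 + z)) = ln (1 - 2*r*cos (2*x) + r^2) / 2"
  proof -
    have "cmod (1+z) > 0" using \<open>1 + z \<noteq> 0\<close> by simp
    then have "ln ((cmod (1 + z))^2) = 2 * ln (cmod (1+z))" by (simp add: ln_realpow)
    then show ?thesis using \<open>(cmod (1 + z))^2 = _\<close> by simp
  qed
  ultimately show ?thesis using sums_minus by fastforce
qed

definition alpha :: "nat \<Rightarrow> nat \<Rightarrow> real" where
  "alpha m j = (-1)^(j+1) * fact (2*m) / fact (2*m - 2*j + 1) * (pi/2)^(2*m - 2*j + 1) / 4^j"

lemma jc_rec:
  assumes "k \<ge> 1"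
  shows "jc (2 * real k) (pi/2) (Suc (Suc n)) =
     real (Suc (Suc n)) * (-1)^k * (pi/2)^(Suc n) / (2*real k)^2
     - real (Suc (Suc n)) * real (Suc n) / (2*real k)^2 * jc (2 * real k) (pi/2) n"
proof -
  have e: "2 * real k * (pi/2) = real k * pi" by simp
  show ?thesis using assms by (simp add: e power2_eq_square field_simps)
qed

lemma alpha_aux:
  fixes A B C F P :: real
  shows "(-1)^(Suc j + 1) * (A*B*C) / F * P / 4^(Suc j) = - A*B/4 * ((-1)^(j+1) * C / F * P / 4^j)"
  by (simp add: power_Suc mult_ac)

lemma jc_closed:
  assumes "k \<ge> 1"
  shows "jc (2 * real k) (pi/2) (2*m) = (-1)^k * (\<Sum>j=1..m. alpha m j / real k ^ (2*j))"
proof (induction m)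
  case 0
  have e: "2 * real k * (pi/2) = real k * pi" by simp
  show ?case by (simp add: e)
next
  case (Suc m)
  have s: "(\<Sum>j=1..Suc m. alpha (Suc m) j / real k ^ (2*j)) =
        alpha (Suc m) 1 / real k ^ 2 + (\<Sum>j=1..m. alpha (Suc m) (Suc j) / real k ^ (2*Suc j))"
  proof -
    have "(\<Sum>j=1..Suc m. alpha (Suc m) j / real k ^ (2*j)) =
        alpha (Suc m) 1 / real k ^ (2*1) + (\<Sum>j=Suc 1..Suc m. alpha (Suc m) j / real k ^ (2*j))"
      by (rule sum.atLeast_Suc_atMost) simp
    also have "(\<Sum>j=Suc 1..Suc m. alpha (Suc m) j / real k ^ (2*j)) = (\<Sum>j=1..m. alpha (Suc m) (Suc j) / real k ^ (2*Suc j))"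
      by (rule sum.shift_bounds_cl_Suc_ivl)
    finally show ?thesis by simp
  qed
  have a1: "alpha (Suc m) 1 = real (2*m+2) * (pi/2)^(2*m+1) / 4"
  proof -
    have e1: "2 * Suc m - 2 * 1 + 1 = 2*m+1" by simp
    have e2: "(fact (2 * Suc m) :: real) = real (2*m+2) * fact (2*m+1)"
    proof -
      have "2 * Suc m = Suc (2*m+1)" by simp
      then show ?thesis by (simp only: fact_Suc) simp
    qed
    show ?thesis unfolding alpha_def e1 e2 by simp
  qed
  have a2: "alpha (Suc m) (Suc j) = - real (2*m+2) * real (2*m+1) / 4 * alpha m j" if "j \<le> m" for j
  proof -
    have f1: "(fact (2 * Suc m) :: real) = real (2*m+2) * real (2*m+1) * fact (2*m)"
    proof -
      have "2 * Suc m = Suc (Suc (2*m))" by simp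
      then show ?thesis by (simp only: fact_Suc) simp
    qed
    have f2: "2 * Suc m - 2 * Suc j + 1 = 2*m - 2*j + 1" using that by simp
    show ?thesis unfolding alpha_def f2 f1 by (rule alpha_aux)
  qed
  have "jc (2 * real k) (pi/2) (2 * Suc m) = jc (2 * real k) (pi/2) (Suc (Suc (2*m)))" by simp
  also have "\<dots> = real (2*m+2) * (-1)^k * (pi/2)^(2*m+1) / (2*real k)^2
     - real (2*m+2) * real (2*m+1) / (2*real k)^2 * jc (2 * real k) (pi/2) (2*m)"
    by (subst jc_rec[OF assms]) simp
  also have "\<dots> = (-1)^k * (\<Sum>j=1..Suc m. alpha (Suc m) j / real k ^ (2*j))"
  proof -
    have ks: "(\<Sum>j=1..m. alpha (Suc m) (Suc j) / real k ^ (2*Suc j)) =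
       - real (2*m+2) * real (2*m+1) / (4 * real k ^ 2) * (\<Sum>j=1..m. alpha m j / real k ^ (2*j))"
      unfolding sum_distrib_left
    proof (rule sum.cong[OF refl])
      fix j assume "j \<in> {1..m}"
      then have "j \<le> m" by simp
      have p: "real k ^ (2 * Suc j) = real k ^ 2 * real k ^ (2*j)" by (simp add: power_add[symmetric])
      show "alpha (Suc m) (Suc j) / real k ^ (2 * Suc j) =
         - real (2 * m + 2) * real (2 * m + 1) / (4 * real k ^ 2) * (alpha m j / real k ^ (2 * j))"
        unfolding a2[OF \<open>j \<le> m\<close>] p by simp
    qed
    show ?thesis unfolding Suc.IH s a1 ks using assms by (simp add: power_mult_distrib field_simps)
  qed
  finally show ?case .
qed

lemma sin_ge_x_cos:
  fixes x :: real assumes "0 < x" "x \<le> pi"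
  shows "x * cos x \<le> sin x"
proof -
  obtain z where z: "0 < z" "z < x" "sin x - sin 0 = (x - 0) * cos z"
    using MVT2[OF assms(1), of sin cos] by (auto intro: DERIV_sin)
  have "cos x \<le> cos z" using z assms by (intro cos_monotone_0_pi_le) auto
  then show ?thesis using z assms by (simp add: mult_left_mono)
qed

lemma sin_ge_x_over_pi:
  fixes x :: real assumes "0 < x" "x \<le> pi/2"
  shows "x / pi \<le> sin x"
proof (cases "x \<le> pi/3")
  case True
  have "cos (pi/3) \<le> cos x" using True assms by (intro cos_monotone_0_pi_le) auto
  then have "1/2 \<le> cos x" by (simp add: cos_60)
  then have "x * (1/2) \<le> x * cos x" using assms by (intro mult_left_mono) auto
  also have "\<dots> \<le> sin x" using assms by (intro sin_ge_x_cos) auto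
  finally have "x/2 \<le> sin x" by simp
  moreover have "x / pi \<le> x / 2" using assms pi_gt3 by (intro divide_left_mono) auto
  ultimately show ?thesis by linarith
next
  case False
  have "sin (pi/3) \<le> sin x" using False assms by (subst sin_mono_le_eq) auto
  then have "sqrt 3 / 2 \<le> sin x" by (simp add: sin_60)
  moreover have "1 \<le> sqrt 3" by simp
  moreover have "x / pi \<le> 1/2" using assms pi_gt_zero by (simp add: divide_simps)
  ultimately show ?thesis by linarith
qed

lemma ln_has_integral:
  fixes b :: real assumes "0 < b"
  shows "(ln has_integral (b * ln b - b)) {0..b}"
proof -
  define G where "G x = (if x = 0 then 0 else x * ln x - x)" for x :: real
  have "(ln has_integral (G b - G 0)) {0..b}"
  proof (rule fundamental_theorem_of_calculus_interior)
    show "0 \<le> b" using assms by simp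
    show "continuous_on {0..b} G"
    proof (clarsimp simp: continuous_on_eq_continuous_within)
      fix x assume x: "0 \<le> x" "x \<le> b"
      show "continuous (at x within {0..b}) G"
      proof (cases "x = 0")
        case True
        have "((\<lambda>x. x * ln x - x) \<longlongrightarrow> 0) (at_right (0::real))" by real_asymp
        then have "(G \<longlongrightarrow> 0) (at_right 0)"
          by (rule tendsto_cong[THEN iffD1, rotated]) (auto simp: G_def eventually_at_right_less)
        then show ?thesis using True assms
          by (simp add: continuous_within at_within_Icc_at_right G_def)
      next
        case False
        then have "x > 0" using x by simp
        have "continuous (at x) (\<lambda>x. x * ln x - x)" using \<open>x > 0\<close>
          by (intro continuous_intros) auto
        moreover have "eventually (\<lambda>y. y * ln y - y = G y) (nhds x)"
          using eventually_nhds_in_open[of "{0<..}" x] \<open>x > 0\<close>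
          by (auto elim!: eventually_mono simp: G_def)
        ultimately have "continuous (at x) G"
          using isCont_cong[of "\<lambda>x. x * ln x - x" G x] by blast
        then show ?thesis by (rule continuous_at_imp_continuous_at_within)
      qed
    qed
    fix x assume x: "x \<in> {0<..<b}"
    have "((\<lambda>x. x * ln x - x) has_real_derivative (1 * ln x + x * (1/x) - 1)) (at x)"
      using x by (auto intro!: derivative_eq_intros)
    then have d: "((\<lambda>x. x * ln x - x) has_real_derivative ln x) (at x)" using x by simp
    have "(G has_real_derivative ln x) (at x)"
    proof (rule has_field_derivative_transform_within_open[OF d, of "{0<..}"])
    qed (use x in \<open>auto simp: G_def\<close>)
    then show "(G has_vector_derivative ln x) (at x)"
      by (simp add: has_real_derivative_iff_has_vector_derivative)
  qed
  then show ?thesis using assms by (simp add: G_def)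
qed

lemma Q_eq: "1 - 2*r*cos (2*x) + r^2 = (1 - r)^2 + 4 * r * (sin x)^2" for r x :: real
proof -
  have "cos (2*x) = 1 - 2 * (sin x)^2" by (rule cos_double_sin)
  then show ?thesis unfolding \<open>cos (2*x) = _\<close> by (simp add: power2_eq_square algebra_simps)
qed

lemma Q_pos: "0 \<le> r \<Longrightarrow> r < 1 \<Longrightarrow> 0 < 1 - 2*r*cos (2*x) + r^2" for r x :: real
  unfolding Q_eq by (intro add_pos_nonneg) auto

lemma L_bound:
  fixes r x :: real
  assumes r: "1/2 \<le> r" "r < 1" and x: "0 < x" "x \<le> pi/2"
  shows "\<bar>ln (1 - 2*r*cos (2*x) + r^2) / 2\<bar> \<le> 2 + ln pi - ln x"
proof -
  define Q where "Q = 1 - 2*r*cos (2*x) + r^2"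
  have Qe: "Q = (1 - r)^2 + 4 * r * (sin x)^2" unfolding Q_def by (rule Q_eq)
  have s: "x / pi \<le> sin x" using x by (rule sin_ge_x_over_pi)
  have xp: "0 < x / pi" using x by simp
  have "(x/pi)^2 \<le> (sin x)^2" using s xp by (intro power_mono) auto
  moreover have "(sin x)^2 \<le> 4 * r * (sin x)^2" 
  proof -
    have "1 * (sin x)^2 \<le> (4 * r) * (sin x)^2" using r by (intro mult_right_mono) auto
    then show ?thesis by simp
  qed
  moreover have "0 \<le> (1 - r)^2" by simp
  ultimately have low: "(x/pi)^2 \<le> Q" unfolding Qe by linarith
  have "sin x ^ 2 \<le> 1" by (simp add: abs_square_le_1)
  then have "(4 * r) * (sin x)^2 \<le> 4 * 1" using r by (intro mult_mono) auto
  moreover have "(1 - r)^2 \<le> 1" using r by (intro power_le_one) auto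
  ultimately have "Q \<le> 5" unfolding Qe by simp
  have "0 < (x/pi)^2" using x by simp
  then have Qp: "0 < Q" using low by linarith
  have "ln Q \<le> Q - 1" using Qp by (rule ln_le_minus_one)
  then have up: "ln Q / 2 \<le> 2" using \<open>Q \<le> 5\<close> by simp
  have "ln ((x/pi)^2) \<le> ln Q" using low \<open>0 < (x/pi)^2\<close> by (rule ln_mono)
  moreover have "ln ((x/pi)^2) = 2 * (ln x - ln pi)" using x by (simp add: ln_realpow ln_div)
  ultimately have lo: "ln x - ln pi \<le> ln Q / 2" by simp
  have "ln x \<le> ln pi" using x by simp
  show ?thesis unfolding Q_def[symmetric] using up lo \<open>ln x \<le> ln pi\<close> by linarith
qed

lemma term_integral:
  fixes r :: real
  shows "((\<lambda>x. x^(2*m) * (r^n * cos (real n * (2*x)) / real n)) has_integral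
          r^n * jc (2 * real n) (pi/2) (2*m) / real n) {0..pi/2}"
proof (cases "n = 0")
  case True
  then show ?thesis by simp
next
  case False
  have w: "2 * real n \<noteq> 0" using False by simp
  have "((\<lambda>x. x^(2*m) * cos (2 * real n * x)) has_integral jc (2 * real n) (pi/2) (2*m)) {0..pi/2}"
    using jc_ks_integral[OF w, of "pi/2" "2*m"] by simp
  from has_integral_mult_right[OF this, of "r^n / real n"]
  show ?thesis by (simp add: mult_ac)
qed

lemma fixed_r:
  fixes r :: real
  assumes r: "0 \<le> r" "r < 1"
  shows "(\<lambda>n. r^n * jc (2 * real n) (pi/2) (2*m) / real n) sums
           integral {0..pi/2} (\<lambda>x. x^(2*m) * (- ln (1 - 2*r*cos (2*x) + r^2) / 2))"
    and "(\<lambda>x. x^(2*m) * (- ln (1 - 2*r*cos (2*x) + r^2) / 2)) integrable_on {0..pi/2}"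
proof -
  define f where "f N x = (\<Sum>n<N. x^(2*m) * (r^n * cos (real n * (2*x)) / real n))" for N x
  define g where "g x = x^(2*m) * (- ln (1 - 2*r*cos (2*x) + r^2) / 2)" for x
  define h where "h x = (pi/2)^(2*m) * suminf (\<lambda>n. r^n)" for x :: real
  have fi: "(f N has_integral (\<Sum>n<N. r^n * jc (2 * real n) (pi/2) (2*m) / real n)) {0..pi/2}" for N
    unfolding f_def by (intro has_integral_sum[OF finite_lessThan] term_integral)
  have sg: "summable (\<lambda>n. r^n)" using r by (intro summable_geometric) auto
  have bound: "norm (f N x) \<le> h x" if "x \<in> {0..pi/2}" for N x
  proof -
    have "norm (f N x) \<le> (\<Sum>n<N. norm (x^(2*m) * (r^n * cos (real n * (2*x)) / real n)))"
      unfolding f_def by (rule norm_sum)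
    also have "\<dots> \<le> (\<Sum>n<N. (pi/2)^(2*m) * r^n)"
    proof (rule sum_mono)
      fix n
      have x1: "\<bar>x\<bar>^(2*m) \<le> (pi/2)^(2*m)" using that by (intro power_mono) auto
      have c1: "\<bar>cos (real n * (2*x)) / real n\<bar> \<le> 1"
      proof (cases "n = 0")
        case False
        have "\<bar>cos (real n * (2*x))\<bar> \<le> 1" by (rule abs_cos_le_one)
        also have "1 \<le> real n" using False by simp
        finally have "\<bar>cos (real n * (2*x))\<bar> \<le> 1 * real n" by simp
        then show ?thesis using False by (simp add: divide_le_eq)
      qed simp
      have "norm (x^(2*m) * (r^n * cos (real n * (2*x)) / real n)) =
          \<bar>x\<bar>^(2*m) * (r^n * \<bar>cos (real n * (2*x)) / real n\<bar>)"
        using r by (simp add: abs_mult power_abs)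
      also have "\<dots> \<le> (pi/2)^(2*m) * (r^n * 1)"
        using x1 c1 r by (intro mult_mono mult_left_mono) auto
      finally show "norm (x^(2*m) * (r^n * cos (real n * (2*x)) / real n)) \<le> (pi/2)^(2*m) * r^n" by simp
    qed
    also have "\<dots> = (pi/2)^(2*m) * (\<Sum>n<N. r^n)" by (simp add: sum_distrib_left)
    also have "\<dots> \<le> h x" unfolding h_def
      using r by (intro mult_left_mono sum_le_suminf[OF sg]) auto
    finally show ?thesis .
  qed
  have conv: "(\<lambda>N. f N x) \<longlonglongrightarrow> g x" for x
  proof -
    have "(\<lambda>n. x^(2*m) * (r^n * cos (real n * (2*x)) / real n)) sums (x^(2*m) * (- ln (1 - 2*r*cos (2*x) + r^2) / 2))"
      by (rule sums_mult[OF log_series_cos[OF r]])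
    then show ?thesis unfolding f_def g_def sums_def .
  qed
  have hi: "h integrable_on {0..pi/2}" unfolding h_def by (rule integrable_const_ivl)
  have fint: "f N integrable_on {0..pi/2}" for N using fi by blast
  note dc = dominated_convergence[OF fint hi bound conv]
  show "g integrable_on {0..pi/2}" by (rule dc(1))
  have "(\<lambda>N. \<Sum>n<N. r^n * jc (2 * real n) (pi/2) (2*m) / real n) \<longlonglongrightarrow> integral {0..pi/2} g"
  proof -
    have "integral {0..pi/2} (f N) = (\<Sum>n<N. r^n * jc (2 * real n) (pi/2) (2*m) / real n)" for N
      using fi[of N] by (rule integral_unique)
    then show ?thesis using dc(2) by simp
  qed
  then show "(\<lambda>n. r^n * jc (2 * real n) (pi/2) (2*m) / real n) sums integral {0..pi/2} g"
    unfolding sums_def .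
qed

definition T :: "nat \<Rightarrow> real \<Rightarrow> real" where
  "T s r = (\<Sum>n. (-r)^n / real n ^ s)"

lemma T_summable:
  assumes "2 \<le> s" "\<bar>r\<bar> \<le> 1"
  shows "summable (\<lambda>n. (-r)^n / real n ^ s)"
proof (rule summable_comparison_test[OF _ inverse_power_summable[OF assms(1)]])
  show "\<exists>N. \<forall>n\<ge>N. norm ((-r)^n / real n ^ s) \<le> inverse (real n ^ s :: real)"
  proof (intro exI allI impI)
    fix n :: nat
    have "\<bar>r\<bar>^n \<le> 1" using assms(2) by (intro power_le_one) auto
    then have "\<bar>r\<bar>^n / real n ^ s \<le> 1 / real n ^ s" by (intro divide_right_mono) auto
    then show "norm ((-r)^n / real n ^ s) \<le> inverse (real n ^ s :: real)"
      by (simp add: abs_mult power_abs divide_inverse)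
  qed
qed

lemma coeff_expand:
  fixes r :: real
  shows "r^n * jc (2 * real n) (pi/2) (2*m) / real n = (\<Sum>j=1..m. alpha m j * ((-r)^n / real n ^ (2*j+1)))"
proof (cases "n = 0")
  case True then show ?thesis by simp
next
  case False
  then have n1: "n \<ge> 1" by simp
  have "r^n * jc (2 * real n) (pi/2) (2*m) / real n = (\<Sum>j=1..m. r^n * (-1)^n * (alpha m j / real n ^ (2*j)) / real n)"
    unfolding jc_closed[OF n1] by (simp add: sum_distrib_left sum_divide_distrib mult_ac)
  also have "\<dots> = (\<Sum>j=1..m. alpha m j * ((-r)^n / real n ^ (2*j+1)))"
  proof (rule sum.cong[OF refl])
    fix j
    show "r^n * (-1)^n * (alpha m j / real n ^ (2*j)) / real n = alpha m j * ((-r)^n / real n ^ (2*j+1))"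
      using False by (simp add: power_minus' power_add field_simps)
  qed
  finally show ?thesis .
qed

lemma sums_T:
  fixes r :: real
  assumes "\<bar>r\<bar> \<le> 1"
  shows "(\<lambda>n. r^n * jc (2 * real n) (pi/2) (2*m) / real n) sums (\<Sum>j=1..m. alpha m j * T (2*j+1) r)"
  unfolding coeff_expand T_def
  by (intro sums_sum sums_mult summable_sums T_summable assms) auto

lemma T_limit:
  assumes "2 \<le> s" and r: "\<And>N. 0 \<le> r N \<and> r N \<le> 1" and lim: "r \<longlonglongrightarrow> 1"
  shows "(\<lambda>N. T s (r N)) \<longlonglongrightarrow> T s 1"
proof -
  have "((\<lambda>N. \<Sum>n. (- r N)^n / real n ^ s) \<longlongrightarrow> (\<Sum>n. (-1)^n / real n ^ s)) sequentially"
  proof (rule tannerys_theorem[where M = "\<lambda>n. inverse (real n ^ s)", THEN conjunct2, THEN conjunct2])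
    show "((\<lambda>N. (- r N)^n / real n ^ s) \<longlongrightarrow> (-1)^n / real n ^ s) sequentially" for n
    proof -
      have "(\<lambda>N. (- r N)^n) \<longlonglongrightarrow> (-1)^n" by (intro tendsto_intros lim)
      from tendsto_mult_right[OF this, of "inverse (real n ^ s)"]
      show ?thesis by (simp add: divide_inverse mult_ac)
    qed
    show "\<forall>\<^sub>F (n, N) in at_top \<times>\<^sub>F sequentially. norm ((- r N)^n / real n ^ s) \<le> inverse (real n ^ s)"
    proof (intro always_eventually allI, clarify)
      fix n N
      have "\<bar>r N\<bar>^n \<le> 1" using r[of N] by (intro power_le_one) auto
      then have "\<bar>r N\<bar>^n / real n ^ s \<le> 1 / real n ^ s" by (intro divide_right_mono) auto
      then show "norm ((- r N)^n / real n ^ s) \<le> inverse (real n ^ s)"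
        by (simp add: abs_mult power_abs divide_inverse)
    qed
    show "summable (\<lambda>n. inverse (real n ^ s))" by (rule inverse_power_summable[OF assms(1)])
  qed simp
  then show ?thesis unfolding T_def by simp
qed

lemma T_eta:
  assumes "1 \<le> j"
  shows "T (2*j+1) 1 = - dirichlet_eta (real (2*j+1))"
proof -
  define f where "f n = (-1::real)^n / real n ^ (2*j+1)" for n
  have sf: "summable f" unfolding f_def using T_summable[of "2*j+1" "1"] assms by simp
  then have "f sums (T (2*j+1) 1)" unfolding T_def f_def by (simp add: summable_sums)
  moreover have "f 0 = 0" by (simp add: f_def)
  ultimately have "(\<lambda>n. f (Suc n)) sums (T (2*j+1) 1)" using sums_Suc_iff[of f "T (2*j+1) 1"] by simp
  moreover have "f (Suc n) = - ((-1)^n / (real (Suc n)) powr (real (2*j+1)))" for n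
    unfolding f_def by (subst powr_realpow) auto
  ultimately have "(\<lambda>n. - ((-1)^n / (real (Suc n)) powr (real (2*j+1)))) sums (T (2*j+1) 1)" by simp
  then have "(\<lambda>n. (-1)^n / (real (Suc n)) powr (real (2*j+1))) sums (- T (2*j+1) 1)"
    using sums_minus by fastforce
  then show ?thesis unfolding dirichlet_eta_def by (simp add: sums_iff)
qed

lemma eta_one: "dirichlet_eta 1 = ln 2"
proof -
  have "(\<lambda>n. (-1)^n / (real (Suc n)) powr 1) = (\<lambda>k. (-1)^k / real (Suc k))"
    by (rule ext) (simp add: powr_one)
  then show ?thesis unfolding dirichlet_eta_def using alternating_harmonic_series_sums
    by (simp add: sums_iff)
qed

lemma power_has_integral:
  fixes b :: real assumes "0 \<le> b"
  shows "((\<lambda>x. x^n) has_integral (b^(Suc n) / real (Suc n))) {0..b}"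
proof -
  have "((\<lambda>x. x^n) has_integral (b^(Suc n) / real (Suc n) - 0^(Suc n) / real (Suc n))) {0..b}"
  proof (rule fundamental_theorem_of_calculus[OF assms])
    fix x :: real
    have "((\<lambda>x. x^(Suc n) / real (Suc n)) has_real_derivative x^n) (at x)"
      using DERIV_cdivide[OF DERIV_pow[of "Suc n" x], of "real (Suc n)"] by simp
    then show "((\<lambda>x. x^(Suc n) / real (Suc n)) has_vector_derivative x^n) (at x within {0..b})"
      by (simp add: has_real_derivative_iff_has_vector_derivative has_vector_derivative_at_within)
  qed
  then show ?thesis by simp
qed

lemma final_value:
  "fact (2 * m) * (\<Sum>j = 0..m. (-1) ^ (j + 1) * dirichlet_eta (real (2 * j + 1))
        / (2 ^ (2 * j) * fact (2 * m - 2 * j + 1)) * (pi / 2) ^ (2 * m - 2 * j + 1))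
   = (\<Sum>j=1..m. alpha m j * dirichlet_eta (real (2*j+1))) - ln 2 * ((pi/2)^(Suc (2*m)) / real (Suc (2*m)))"
proof -
  have split: "(\<Sum>j = 0..m. (-1) ^ (j + 1) * dirichlet_eta (real (2 * j + 1))
        / (2 ^ (2 * j) * fact (2 * m - 2 * j + 1)) * (pi / 2) ^ (2 * m - 2 * j + 1)) =
      - dirichlet_eta 1 / fact (2*m+1) * (pi/2)^(2*m+1) +
      (\<Sum>j = 1..m. (-1) ^ (j + 1) * dirichlet_eta (real (2 * j + 1))
        / (2 ^ (2 * j) * fact (2 * m - 2 * j + 1)) * (pi / 2) ^ (2 * m - 2 * j + 1))"
    by (subst sum.atLeast_Suc_atMost) auto
  have t: "fact (2*m) * ((-1) ^ (j + 1) * dirichlet_eta (real (2 * j + 1))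
        / (2 ^ (2 * j) * fact (2 * m - 2 * j + 1)) * (pi / 2) ^ (2 * m - 2 * j + 1))
        = alpha m j * dirichlet_eta (real (2*j+1))" for j
  proof -
    have "(2::real) ^ (2 * j) = 4^j" by (simp add: power_mult)
    then show ?thesis unfolding alpha_def by (simp add: field_simps)
  qed
  have f: "(fact (2*m+1) :: real) = real (Suc (2*m)) * fact (2*m)" by simp
  have fp: "(fact (2*m) :: real) \<noteq> 0" by simp
  have z: "fact (2*m) * (- ln 2 / fact (2*m+1) * (pi/2)^(2*m+1)) = - ln 2 * ((pi/2)^(Suc (2*m)) / real (Suc (2*m)))"
  proof -
    have gen: "c \<noteq> 0 \<Longrightarrow> c * (- l / (d * c) * P) = - l * (P / d)" for c d l P :: real
      by (simp add: divide_simps)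
    show ?thesis unfolding f using gen[OF fp] by simp
  qed
  show ?thesis unfolding split distrib_left sum_distrib_left t eta_one z by simp
qed

lemma spike_0:
  fixes f :: "real \<Rightarrow> real" and b :: real
  shows "(f has_integral y) {0<..b} \<longleftrightarrow> (f has_integral y) {0..b}"
proof (rule has_integral_spike_set_eq)
  show "negligible {x \<in> {0<..b} - {0..b}. f x \<noteq> 0}" by (rule negligible_subset[of "{}"]) auto
  show "negligible {x \<in> {0..b} - {0<..b}. f x \<noteq> 0}" by (rule negligible_subset[of "{0}"]) auto
qed

theorem mainTheorem10:
  fixes m :: nat
  shows "((\<lambda>x::real. x ^ (2 * m) * ln (sin x)) has_integral
     (fact (2 * m) * (\<Sum>j = 0..m. (-1) ^ (j + 1) * dirichlet_eta (real (2 * j + 1))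
        / (2 ^ (2 * j) * fact (2 * m - 2 * j + 1)) * (pi / 2) ^ (2 * m - 2 * j + 1)))) {0..pi/2}"
proof -
  define A where "A = pi / 2"
  have A0: "0 < A" unfolding A_def by simp
  define rs where "rs N = 1 - inverse (real (Suc (Suc N)))" for N
  have rs_b: "1/2 \<le> rs N \<and> rs N < 1" for N
  proof -
    have "inverse (real (Suc (Suc N))) \<le> 1/2" by (simp add: field_simps)
    moreover have "0 < inverse (real (Suc (Suc N)))" by simp
    ultimately show ?thesis unfolding rs_def by linarith
  qed
  have rs_lim: "rs \<longlonglongrightarrow> 1"
  proof -
    have "(\<lambda>N. inverse (real (Suc (Suc N)))) \<longlonglongrightarrow> 0"
      using LIMSEQ_Suc[OF LIMSEQ_inverse_real_of_nat] by simp
    from tendsto_diff[OF tendsto_const[of 1] this] show ?thesis unfolding rs_def[abs_def] by simp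
  qed
  define Q where "Q r x = 1 - 2*r*cos (2*x) + r^2" for r x :: real
  define y where "y N = - (\<Sum>j=1..m. alpha m j * T (2*j+1) (rs N))" for N
  define Lim where "Lim = (\<Sum>j=1..m. alpha m j * dirichlet_eta (real (2*j+1)))"
  define h where "h x = A^(2*m) * (2 + ln pi - ln x)" for x :: real
  define g where "g x = x^(2*m) * (ln 2 + ln (sin x))" for x :: real
  have fint: "((\<lambda>x. x^(2*m) * (ln (Q (rs N) x) / 2)) has_integral y N) {0<..A}" for N
  proof -
    have r: "0 \<le> rs N" "rs N < 1" using rs_b[of N] by auto
    note fr = fixed_r[OF r, of m]
    have "(\<lambda>n. rs N^n * jc (2 * real n) (pi/2) (2*m) / real n) sums (\<Sum>j=1..m. alpha m j * T (2*j+1) (rs N))"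
      using r by (intro sums_T) auto
    then have eq: "integral {0..pi/2} (\<lambda>x. x^(2*m) * (- ln (1 - 2*rs N*cos (2*x) + (rs N)^2) / 2))
       = (\<Sum>j=1..m. alpha m j * T (2*j+1) (rs N))"
      using fr(1) sums_unique2 by blast
    have "((\<lambda>x. x^(2*m) * (- ln (1 - 2*rs N*cos (2*x) + (rs N)^2) / 2)) has_integral
        (\<Sum>j=1..m. alpha m j * T (2*j+1) (rs N))) {0..pi/2}"
      using integrable_integral[OF fr(2)] unfolding eq .
    from has_integral_neg[OF this]
    have "((\<lambda>x. x^(2*m) * (ln (Q (rs N) x) / 2)) has_integral y N) {0..A}"
      unfolding y_def Q_def A_def by simp
    then show ?thesis by (simp add: spike_0)
  qed
  have hint: "h integrable_on {0<..A}"
  proof -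
    have c: "((\<lambda>x. A^(2*m) * (2 + ln pi)) has_integral (A^(2*m) * (2 + ln pi) * (A - 0))) {0..A}"
      using has_integral_const_real[of "A^(2*m) * (2 + ln pi)" 0 A] A0 by (simp add: mult_ac)
    have l: "((\<lambda>x. A^(2*m) * ln x) has_integral (A^(2*m) * (A * ln A - A))) {0..A}"
      by (rule has_integral_mult_right[OF ln_has_integral[OF A0]])
    have e: "(\<lambda>x. A^(2*m) * (2 + ln pi) - A^(2*m) * ln x) = h"
      unfolding h_def by (rule ext) (simp add: algebra_simps)
    from has_integral_diff[OF c l]
    have "(h has_integral (A^(2*m) * (2 + ln pi) * (A - 0) - A^(2*m) * (A * ln A - A))) {0..A}"
      unfolding e .
    then show ?thesis by (auto simp: spike_0 integrable_on_def)
  qed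
  have bound: "\<forall>x\<in>{0<..A}. norm (x^(2*m) * (ln (Q (rs N) x) / 2)) \<le> h x" for N
  proof
    fix x assume x: "x \<in> {0<..A}"
    have lb: "\<bar>ln (Q (rs N) x) / 2\<bar> \<le> 2 + ln pi - ln x"
      unfolding Q_def using rs_b[of N] x by (intro L_bound) (auto simp: A_def)
    have "\<bar>x\<bar>^(2*m) \<le> A^(2*m)" using x by (intro power_mono) auto
    then have "\<bar>x\<bar>^(2*m) * \<bar>ln (Q (rs N) x) / 2\<bar> \<le> A^(2*m) * (2 + ln pi - ln x)"
      using lb by (intro mult_mono) auto
    then show "norm (x^(2*m) * (ln (Q (rs N) x) / 2)) \<le> h x"
      unfolding h_def by (simp add: abs_mult power_abs)
  qed
  have conv: "\<forall>x\<in>{0<..A}. (\<lambda>N. x^(2*m) * (ln (Q (rs N) x) / 2)) \<longlonglongrightarrow> g x"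
  proof
    fix x assume x: "x \<in> {0<..A}"
    have sp: "0 < sin x" using x by (intro sin_gt_zero) (auto simp: A_def)
    have Q1: "Q 1 x = 4 * (sin x)^2" unfolding Q_def Q_eq by simp
    have "(\<lambda>N. x^(2*m) * (ln (Q (rs N) x) / 2)) \<longlonglongrightarrow> x^(2*m) * (ln (Q 1 x) / 2)"
      unfolding Q_def using sp Q1[unfolded Q_def]
      by (intro tendsto_intros rs_lim) auto
    moreover have "ln (Q 1 x) / 2 = ln 2 + ln (sin x)"
    proof -
      have "ln (Q 1 x) = ln ((2 * sin x)^2)" unfolding Q1 by (simp add: power_mult_distrib)
      also have "\<dots> = 2 * ln (2 * sin x)" using sp ln_realpow[of "2 * sin x" 2] by simp
      also have "\<dots> = 2 * (ln 2 + ln (sin x))" using sp by (simp add: ln_mult)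
      finally show ?thesis by simp
    qed
    ultimately show "(\<lambda>N. x^(2*m) * (ln (Q (rs N) x) / 2)) \<longlonglongrightarrow> g x" unfolding g_def by simp
  qed
  have ylim: "y \<longlonglongrightarrow> Lim"
  proof -
    have "(\<lambda>N. T (2*j+1) (rs N)) \<longlonglongrightarrow> - dirichlet_eta (real (2*j+1))" if "j \<in> {1..m}" for j
    proof -
      have "(\<lambda>N. T (2*j+1) (rs N)) \<longlonglongrightarrow> T (2*j+1) 1"
      proof (rule T_limit[OF _ _ rs_lim])
        show "2 \<le> 2*j+1" using that by simp
        fix N show "0 \<le> rs N \<and> rs N \<le> 1" using rs_b[of N] by auto
      qed
      then show ?thesis using that T_eta[of j] by simp
    qed
    then have "(\<lambda>N. - (\<Sum>j=1..m. alpha m j * T (2*j+1) (rs N))) \<longlonglongrightarrow>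
        - (\<Sum>j=1..m. alpha m j * (- dirichlet_eta (real (2*j+1))))"
      by (intro tendsto_intros) auto
    then show ?thesis unfolding y_def[abs_def] Lim_def by (simp add: sum_negf)
  qed
  have gint: "(g has_integral Lim) {0<..A}"
    by (rule has_integral_dominated_convergence[OF fint hint bound conv ylim])
  have pint: "((\<lambda>x. x^(2*m)) has_integral (A^(Suc (2*m)) / real (Suc (2*m)))) {0<..A}"
    using power_has_integral[of A "2*m"] A0 by (simp add: spike_0)
  have "((\<lambda>x. g x - ln 2 * x^(2*m)) has_integral (Lim - ln 2 * (A^(Suc (2*m)) / real (Suc (2*m))))) {0<..A}"
    by (intro has_integral_diff gint has_integral_mult_right pint)
  then have "((\<lambda>x. x^(2*m) * ln (sin x)) has_integral (Lim - ln 2 * (A^(Suc (2*m)) / real (Suc (2*m))))) {0..A}"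
    unfolding g_def by (simp add: spike_0 algebra_simps)
  then show ?thesis unfolding final_value Lim_def A_def .
qed

end
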